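(* Let $s\ge0$, $p\in[1,+\infty)$, $\beta\in\left[-s,\frac dp-s\right]\setminus\{0\}$ and $f\in B^{s,\infty}_p(\mathbb R^d)$. Then $\dim_{\mathcal P}\big(E(\beta,f)\big)\le d-sp-\beta p$. (The wavelets are not assumed to be compactly supported.)
   Context: Standing setup. $(V_j)_{j\in\mathbb Z}$ is an orthogonal multiresolution analysis of $L^2(\mathbb R^d)$ with scaling function $\varphi$ (the integer translates of $\varphi$ form an orthonormal basis of $V_0$), and $\psi^{(1)},\dots,\psi^{(2^d-1)}$ are associated wavelets: the functions $2^{dj/2}\psi^{(i)}(2^j\cdot-k)$, $i\in\{1,\dots,2^d-1\}$, $j\in\mathbb Z$, $k\in\mathbb Z^d$, form an orthonormal basis of $L^2(\mathbb R^d)$. The functions $\varphi,\psi^{(i)}$ are smooth (at least $\lfloor s\rfloor+1$ continuous derivatives), and they and these derivatives have fast decay: for every $N\ge0$ there is $C_N$ with $|\psi^{(i)}(x)|\le C_N(1+\|x\|)^{-N}$ for all $x$. $\|\cdot\|$ is the supremum norm on $\mathbb R^d$. For $j\ge0$ and $k\in\mathbb Z^d$, the dyadic cube $\lambda=(j,k)$ is $\prod_{m=1}^d[k_m2^{-j},(k_m+1)2^{-j})$; $\Lambda_j$ is the set of dyadic cubes of generation $j$; $\psi^{(i)}_\lambda(x)=\psi^{(i)}(2^jx-k)$. For $f$ in $L^p(\mathbb R^d)$ set $C_k=\int\overline{\varphi(x-k)}f(x)\,dx$ and $c^{(i)}_\lambda=2^{dj}\int\overline{\psi^{(i)}_\lambda(x)}f(x)\,dx$.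 Define $Q_lf(x)=\sum_{i}\sum_{\lambda\in\Lambda_l}c^{(i)}_\lambda\psi^{(i)}_\lambda(x)$, $P_jf(x)=\sum_kC_k\varphi(x-k)+\sum_{0\le l<j}Q_lf(x)$, and, when $(P_jf(x))_j$ converges, $R_jf(x)=\sum_{l\ge j}Q_lf(x)$. The Besov space $B^{s,q}_p(\mathbb R^d)$ consists of those $f$ with $(C_k)\in\ell^p$ and $(\varepsilon_j)_{j\ge0}\in\ell^q$, where $\varepsilon_j=2^{(s-d/p)j}\big(\sum_i\sum_{\lambda\in\Lambda_j}|c^{(i)}_\lambda|^p\big)^{1/p}$; its norm is $\|(C_k)\|_{\ell^p}+\|(\varepsilon_j)\|_{\ell^q}$. Level set (with $\log0=-\infty$): for $\beta>0$, $E(\beta,f)=\{x:\lim_j\frac{\log|P_jf(x)|}{j\log2}=\beta\}$; for $\beta<0$, $E(\beta,f)=\{x:(P_jf(x))_j\text{ converges and }\lim_j\frac{\log|R_jf(x)|}{j\log2}=\beta\}$. $\dim_{\mathcal P}$ is packing dimension. *)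

theory Defs
  imports "HOL-Analysis.Analysis"
begin

section \<open>Functions on R^d, d = CARD('n)\<close>

definition ivec :: "int^'n::finite \<Rightarrow> real^'n" where
  "ivec k = (\<chi> m. real_of_int (k $ m))"

definition wav_idx :: "'n::finite itself \<Rightarrow> nat set" where
  "wav_idx _ = {1..<2 ^ CARD('n)}"

definition Lp :: "real \<Rightarrow> (real^'n::finite \<Rightarrow> complex) set" where
  "Lp p = {g. g \<in> borel_measurable lebesgue \<and> integrable lebesgue (\<lambda>x. norm (g x) powr p)}"

definition L2inner :: "(real^'n::finite \<Rightarrow> complex) \<Rightarrow> (real^'n \<Rightarrow> complex) \<Rightarrow> complex" where
  "L2inner g h = (LINT x|lebesgue. cnj (g x) * h x)"

definition L2norm :: "(real^'n::finite \<Rightarrow> complex) \<Rightarrow> real" where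
  "L2norm g = sqrt (LINT x|lebesgue. (norm (g x))^2)"

definition is_onb :: "(real^'n::finite \<Rightarrow> complex) set \<Rightarrow> 'i set \<Rightarrow> ('i \<Rightarrow> real^'n \<Rightarrow> complex) \<Rightarrow> bool" where
  "is_onb V I e \<longleftrightarrow>
     (\<forall>i\<in>I. e i \<in> V) \<and>
     (\<forall>i\<in>I. \<forall>i'\<in>I. L2inner (e i) (e i') = (if i = i' then 1 else 0)) \<and>
     (\<forall>g\<in>V. (\<forall>i\<in>I. L2inner (e i) g = 0) \<longrightarrow> (AE x in lebesgue. g x = 0))"

definition ortho_mra :: "(int \<Rightarrow> (real^'n::finite \<Rightarrow> complex) set) \<Rightarrow> (real^'n \<Rightarrow> complex) \<Rightarrow> bool" where
  "ortho_mra V \<phi> \<longleftrightarrow>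
     (\<forall>j. V j \<subseteq> Lp 2) \<and>
     (\<forall>j. (\<lambda>x. 0) \<in> V j \<and> (\<forall>g\<in>V j. \<forall>h\<in>V j. (\<lambda>x. g x + h x) \<in> V j)
          \<and> (\<forall>g\<in>V j. \<forall>c. (\<lambda>x. c * g x) \<in> V j)) \<and>
     (\<forall>j. \<forall>g\<in>Lp 2. (\<forall>e>0. \<exists>h\<in>V j. L2norm (\<lambda>x. g x - h x) < e) \<longrightarrow> g \<in> V j) \<and>
     (\<forall>j. V j \<subseteq> V (j + 1)) \<and>
     (\<forall>g\<in>Lp 2. \<forall>e>0. \<exists>j. \<exists>h\<in>V j. L2norm (\<lambda>x. g x - h x) < e) \<and>
     (\<forall>g. (\<forall>j. g \<in> V j) \<longrightarrow> (AE x in lebesgue. g x = 0)) \<and>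
     (\<forall>j g. g \<in> V j \<longleftrightarrow> (\<lambda>x. g (2 *\<^sub>R x)) \<in> V (j + 1)) \<and>
     is_onb (V 0) UNIV (\<lambda>k x. \<phi> (x - ivec k))"

definition assoc_wavelets :: "(int \<Rightarrow> (real^'n::finite \<Rightarrow> complex) set) \<Rightarrow> (nat \<Rightarrow> real^'n \<Rightarrow> complex) \<Rightarrow> bool" where
  "assoc_wavelets V \<psi> \<longleftrightarrow>
     (\<forall>i\<in>wav_idx TYPE('n). \<forall>k. (\<lambda>x. \<psi> i (x - ivec k)) \<in> V 1
        \<and> (\<forall>g\<in>V 0. L2inner g (\<lambda>x. \<psi> i (x - ivec k)) = 0)) \<and>
     is_onb (Lp 2) (wav_idx TYPE('n) \<times> (UNIV :: int set) \<times> (UNIV :: (int^'n) set))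
       (\<lambda>(i, j, k) x. complex_of_real (2 powr (real CARD('n) * real_of_int j / 2))
                        * \<psi> i (2 powr real_of_int j *\<^sub>R x - ivec k))"

definition fast_decay :: "(real^'n::finite \<Rightarrow> complex) \<Rightarrow> bool" where
  "fast_decay g \<longleftrightarrow> (\<forall>N::nat. \<exists>C. \<forall>x. norm (g x) \<le> C * (1 + infnorm x) powr (- real N))"

definition partial_deriv :: "'n::finite \<Rightarrow> (real^'n \<Rightarrow> complex) \<Rightarrow> real^'n \<Rightarrow> complex" where
  "partial_deriv m g x = vector_derivative (\<lambda>t. g (x + t *\<^sub>R axis m 1)) (at 0)"

fun Cdecay :: "nat \<Rightarrow> (real^'n::finite \<Rightarrow> complex) \<Rightarrow> bool" where
  "Cdecay 0 g \<longleftrightarrow> continuous_on UNIV g \<and> fast_decay g"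
| "Cdecay (Suc n) g \<longleftrightarrow> Cdecay 0 g \<and>
     (\<forall>m. (\<forall>x. (\<lambda>t. g (x + t *\<^sub>R axis m 1)) differentiable (at 0)) \<and> Cdecay n (partial_deriv m g))"

definition scal_coef :: "(real^'n::finite \<Rightarrow> complex) \<Rightarrow> (real^'n \<Rightarrow> complex) \<Rightarrow> int^'n \<Rightarrow> complex" where
  "scal_coef \<phi> f k = (LINT x|lebesgue. cnj (\<phi> (x - ivec k)) * f x)"

definition wav_fun :: "(nat \<Rightarrow> real^'n::finite \<Rightarrow> complex) \<Rightarrow> nat \<Rightarrow> nat \<Rightarrow> int^'n \<Rightarrow> real^'n \<Rightarrow> complex" where
  "wav_fun \<psi> i j k x = \<psi> i ((2::real) ^ j *\<^sub>R x - ivec k)"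

definition wav_coef :: "(nat \<Rightarrow> real^'n::finite \<Rightarrow> complex) \<Rightarrow> (real^'n \<Rightarrow> complex) \<Rightarrow> nat \<Rightarrow> nat \<Rightarrow> int^'n \<Rightarrow> complex" where
  "wav_coef \<psi> f i j k = complex_of_real (2 ^ (CARD('n) * j))
                         * (LINT x|lebesgue. cnj (wav_fun \<psi> i j k x) * f x)"

definition Qop :: "(nat \<Rightarrow> real^'n::finite \<Rightarrow> complex) \<Rightarrow> (real^'n \<Rightarrow> complex) \<Rightarrow> nat \<Rightarrow> real^'n \<Rightarrow> complex" where
  "Qop \<psi> f l x = (\<Sum>i\<in>wav_idx TYPE('n). \<Sum>\<^sub>\<infinity>k. wav_coef \<psi> f i l k * wav_fun \<psi> i l k x)"

definition Pop :: "(real^'n::finite \<Rightarrow> complex) \<Rightarrow> (nat \<Rightarrow> real^'n \<Rightarrow> complex) \<Rightarrow> (real^'n \<Rightarrow> complex) \<Rightarrow> nat \<Rightarrow> real^'n \<Rightarrow> complex" where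
  "Pop \<phi> \<psi> f j x = (\<Sum>\<^sub>\<infinity>k. scal_coef \<phi> f k * \<phi> (x - ivec k)) + (\<Sum>l<j. Qop \<psi> f l x)"

definition Rop :: "(nat \<Rightarrow> real^'n::finite \<Rightarrow> complex) \<Rightarrow> (real^'n \<Rightarrow> complex) \<Rightarrow> nat \<Rightarrow> real^'n \<Rightarrow> complex" where
  "Rop \<psi> f j x = (\<Sum>n. Qop \<psi> f (j + n) x)"

definition besov_inf :: "(real^'n::finite \<Rightarrow> complex) \<Rightarrow> (nat \<Rightarrow> real^'n \<Rightarrow> complex) \<Rightarrow> real \<Rightarrow> real \<Rightarrow> (real^'n \<Rightarrow> complex) set" where
  "besov_inf \<phi> \<psi> s p = {f. f \<in> Lp p \<and>
     (\<lambda>k. norm (scal_coef \<phi> f k) powr p) summable_on UNIV \<and>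
     (\<forall>i\<in>wav_idx TYPE('n). \<forall>j. (\<lambda>k. norm (wav_coef \<psi> f i j k) powr p) summable_on UNIV) \<and>
     bdd_above (range (\<lambda>j. 2 powr ((s - real CARD('n) / p) * real j) *
        (\<Sum>i\<in>wav_idx TYPE('n). \<Sum>\<^sub>\<infinity>k. norm (wav_coef \<psi> f i j k) powr p) powr (1 / p)))}"

text \<open>Level sets E(beta,f). The limit of log|.|/(j log 2) (with log 0 = -infinity) equals the
  finite value beta iff the terms are eventually nonzero and log_2|.|/j tends to beta.\<close>
definition level_set :: "(real^'n::finite \<Rightarrow> complex) \<Rightarrow> (nat \<Rightarrow> real^'n \<Rightarrow> complex) \<Rightarrow> real \<Rightarrow> (real^'n \<Rightarrow> complex) \<Rightarrow> (real^'n) set" where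
  "level_set \<phi> \<psi> \<beta> f =
    (if \<beta> > 0 then
       {x. (\<forall>\<^sub>F j in sequentially. Pop \<phi> \<psi> f j x \<noteq> 0) \<and>
           ((\<lambda>j. log 2 (norm (Pop \<phi> \<psi> f j x)) / real j) \<longlongrightarrow> \<beta>) sequentially}
     else if \<beta> < 0 then
       {x. convergent (\<lambda>j. Pop \<phi> \<psi> f j x) \<and>
           (\<forall>\<^sub>F j in sequentially. Rop \<psi> f j x \<noteq> 0) \<and>
           ((\<lambda>j. log 2 (norm (Rop \<psi> f j x)) / real j) \<longlongrightarrow> \<beta>) sequentially}
     else {})"

definition packing_pre :: "real \<Rightarrow> real \<Rightarrow> ('a::metric_space) set \<Rightarrow> ennreal" where
  "packing_pre t \<delta> E =
     (SUP P \<in> {(I :: nat set, c :: nat \<Rightarrow> 'a, r :: nat \<Rightarrow> real).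
                 (\<forall>i\<in>I. c i \<in> E \<and> 0 < r i \<and> 2 * r i \<le> \<delta>) \<and>
                 (\<forall>i\<in>I. \<forall>i'\<in>I. i \<noteq> i' \<longrightarrow> cball (c i) (r i) \<inter> cball (c i') (r i') = {})}.
        (case P of (I, c, r) \<Rightarrow> (\<Sum>\<^sub>\<infinity>i\<in>I. ennreal ((2 * r i) powr t))))"

definition packing_premeasure :: "real \<Rightarrow> ('a::metric_space) set \<Rightarrow> ennreal" where
  "packing_premeasure t E = (INF \<delta> \<in> {0<..}. packing_pre t \<delta> E)"

definition packing_measure :: "real \<Rightarrow> ('a::metric_space) set \<Rightarrow> ennreal" where
  "packing_measure t E =
     (INF A \<in> {A :: nat \<Rightarrow> 'a set. E \<subseteq> (\<Union>i. A i)}. \<Sum>i. packing_premeasure t (A i))"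

definition packing_dim :: "('a::metric_space) set \<Rightarrow> real" where
  "packing_dim E = Inf {t. 0 \<le> t \<and> packing_measure t E = 0}"

end

theory Submission
  imports Defs "HOL-Real_Asymp.Real_Asymp"
begin


lemma geom_tail:
  fixes q :: real assumes "0 \<le> q" "q < 1"
  shows "(\<Sum>n\<in>{N..M}. q ^ n) \<le> q ^ N / (1 - q)"
proof (cases "N \<le> M")
  case True
  have "{N..M} = (\<lambda>i. N + i) ` {..<M - N + 1}"
  proof (rule set_eqI, rule iffI)
    fix x assume "x \<in> {N..M}"
    then show "x \<in> (\<lambda>i. N + i) ` {..<M - N + 1}"
      by (auto simp: image_iff intro!: bexI[of _ "x - N"])
  qed (use True in auto)
  then have e1: "(\<Sum>n\<in>{N..M}. q ^ n) = q ^ N * (\<Sum>i<M - N + 1. q ^ i)"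
    by (simp add: sum.reindex inj_on_def power_add sum_distrib_left del: sum.lessThan_Suc)
  have "(\<Sum>i<M - N + 1. q ^ i) = (1 - q ^ (M - N + 1)) / (1 - q)"
    using assms by (subst sum_gp_strict) auto
  also have "\<dots> \<le> 1 / (1 - q)" using assms
    by (intro divide_right_mono) auto
  finally have "(\<Sum>i<M - N + 1. q ^ i) \<le> 1 / (1 - q)" .
  then have "q ^ N * (\<Sum>i<M - N + 1. q ^ i) \<le> q ^ N * (1 / (1 - q))"
    using assms by (intro mult_left_mono) auto
  with e1 show ?thesis by simp
next
  case False then show ?thesis using assms by simp
qed

lemma pack_zero:
  fixes F :: "'a::metric_space set" and Y :: "nat \<Rightarrow> 'a set"
  assumes cov: "\<And>n. n \<ge> J \<Longrightarrow> F \<subseteq> (\<Union>y\<in>Y n. cball y (rr * 2 powr (-\<gamma> * real n)))"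
    and fin: "\<And>n. finite (Y n)" and crd: "\<And>n. real (card (Y n)) \<le> C * 2 powr (\<alpha> * real n)"
    and gp: "\<gamma> > 0" and rr: "rr > 0" and tg: "\<alpha> < t * \<gamma>" and t0: "t \<ge> 0"
  shows "packing_premeasure t F = 0"
proof -
  define q where "q = 2 powr (\<alpha> - t * \<gamma>)"
  have q0: "0 < q" by (simp add: q_def)
  have q1: "q < 1" using tg powr_less_mono[of "\<alpha> - t*\<gamma>" 0 2] by (simp add: q_def)
  have C0: "C \<ge> 0" using crd[of 0] by simp
  define w where "w n = (2*rr) powr t * 2 powr (t*\<gamma>) * 2 powr (-(t*\<gamma>) * real n)" for n :: nat
  define K where "K = C * (2*rr) powr t * 2 powr (t*\<gamma>)"
  have K0: "K \<ge> 0" using C0 by (simp add: K_def)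
  have w0: "w n \<ge> 0" for n by (simp add: w_def)
  have cw: "real (card (Y n)) * w n \<le> K * q ^ n" for n
  proof -
    have "real (card (Y n)) * w n \<le> C * 2 powr (\<alpha> * real n) * w n"
      using crd w0 by (intro mult_right_mono) auto
    also have "\<dots> = K * (2 powr (\<alpha> * real n) * 2 powr (-(t*\<gamma>) * real n))"
      by (simp add: w_def K_def algebra_simps)
    also have "2 powr (\<alpha> * real n) * 2 powr (-(t*\<gamma>) * real n) = q ^ n"
      by (simp add: q_def powr_power powr_add[symmetric] algebra_simps)
    finally show ?thesis .
  qed
  have main: "packing_premeasure t F \<le> ennreal e" if e0: "e > 0" for e
  proof -
    have "(\<lambda>N. K * q ^ N / (1 - q)) \<longlonglongrightarrow> K * 0 / (1 - q)"
      using q0 q1 by (intro tendsto_intros LIMSEQ_power_zero) auto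
    then have "\<forall>\<^sub>F N in sequentially. K * q ^ N / (1 - q) < e" using e0
      by (simp add: order_tendsto_iff)
    then obtain N0 where N0: "\<And>N. N \<ge> N0 \<Longrightarrow> K * q ^ N / (1 - q) < e"
      by (auto simp: eventually_sequentially)
    define N where "N = max N0 J"
    have NJ: "N \<ge> J" and Ne: "K * q ^ N / (1 - q) < e" using N0 by (auto simp: N_def)
    define \<delta> where "\<delta> = 2 * rr * 2 powr (-\<gamma> * real N)"
    have \<delta>0: "\<delta> > 0" using rr by (simp add: \<delta>_def)
    have pre: "packing_pre t \<delta> F \<le> ennreal e"
      unfolding packing_pre_def
    proof (rule SUP_least, clarify)
      fix I :: "nat set" and c :: "nat \<Rightarrow> 'a" and r :: "nat \<Rightarrow> real"
      assume P1: "\<forall>i\<in>I. c i \<in> F \<and> 0 < r i \<and> 2 * r i \<le> \<delta>"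
        and P2: "\<forall>i\<in>I. \<forall>i'\<in>I. i \<noteq> i' \<longrightarrow> cball (c i) (r i) \<inter> cball (c i') (r i') = {}"
      have lim0: "(\<lambda>n. rr * (2 powr (-\<gamma>)) ^ n) \<longlonglongrightarrow> rr * 0"
        using gp powr_less_mono[of "-\<gamma>" 0 2] by (intro tendsto_intros LIMSEQ_power_zero) auto
      define nn where "nn i = (LEAST n. N \<le> n \<and> rr * 2 powr (-\<gamma> * real n) \<le> r i)" for i
      have nnP: "N \<le> nn i \<and> rr * 2 powr (-\<gamma> * real (nn i)) \<le> r i
          \<and> r i \<le> rr * 2 powr (-\<gamma> * real (nn i - 1))" if i: "i \<in> I" for i
      proof -
        have ri: "r i > 0" using P1 i by auto
        then have "\<forall>\<^sub>F n in sequentially. rr * (2 powr (-\<gamma>)) ^ n < r i"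
          using lim0 by (simp add: order_tendsto_iff)
        then obtain n0 where n0: "\<And>n. n \<ge> n0 \<Longrightarrow> rr * (2 powr (-\<gamma>)) ^ n < r i"
          by (auto simp: eventually_sequentially)
        have ex: "\<exists>n. N \<le> n \<and> rr * 2 powr (-\<gamma> * real n) \<le> r i"
          using n0[of "max n0 N"]
          by (intro exI[of _ "max n0 N"]) (auto simp: powr_power mult.commute)
        have A: "N \<le> nn i \<and> rr * 2 powr (-\<gamma> * real (nn i)) \<le> r i"
          unfolding nn_def by (rule LeastI_ex[OF ex])
        have B: "r i \<le> rr * 2 powr (-\<gamma> * real (nn i - 1))"
        proof (cases "nn i = N")
          case True
          have "r i \<le> rr * 2 powr (-\<gamma> * real N)" using P1 i by (simp add: \<delta>_def)
          also have "\<dots> \<le> rr * 2 powr (-\<gamma> * real (N - 1))"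
          proof -
            have "-\<gamma> * real N \<le> -\<gamma> * real (N - 1)" using gp by simp
            then show ?thesis by (rule mult_left_mono[OF powr_mono]) (use rr in auto)
          qed
          finally show ?thesis using True by simp
        next
          case False
          with A have "nn i - 1 \<ge> N" "nn i - 1 < nn i" by auto
          then have "\<not> (N \<le> nn i - 1 \<and> rr * 2 powr (-\<gamma> * real (nn i - 1)) \<le> r i)"
            unfolding nn_def by (intro not_less_Least) simp
          with \<open>nn i - 1 \<ge> N\<close> show ?thesis by auto
        qed
        from A B show ?thesis by blast
      qed
      have wb: "(2 * r i) powr t \<le> w (nn i)" if i: "i \<in> I" for i
      proof -
        have ri: "r i > 0" using P1 i by auto
        have "(2 * r i) powr t \<le> (2 * (rr * 2 powr (-\<gamma> * real (nn i - 1)))) powr t"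
          using nnP[OF i] ri t0 by (intro powr_mono2) auto
        also have "\<dots> = (2*rr) powr t * 2 powr (-\<gamma> * real (nn i - 1) * t)"
          using rr by (simp add: powr_mult powr_powr)
        also have "\<dots> \<le> (2*rr) powr t * 2 powr (t*\<gamma> + (-(t*\<gamma>) * real (nn i)))"
        proof -
          have "real (nn i - 1) \<ge> real (nn i) - 1" by linarith
          then have "-\<gamma> * real (nn i - 1) * t \<le> t*\<gamma> + (-(t*\<gamma>) * real (nn i))"
          proof -
            have "(\<gamma>*t)*(real (nn i) - 1) \<le> (\<gamma>*t)*real (nn i - 1)"
              using gp t0 \<open>real (nn i - 1) \<ge> real (nn i) - 1\<close> by (intro mult_left_mono) auto
            then show ?thesis by (simp add: algebra_simps)
          qed
          then show ?thesis by (rule mult_left_mono[OF powr_mono]) auto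
        qed
        also have "\<dots> = w (nn i)" by (simp add: w_def powr_add[symmetric])
        finally show ?thesis .
      qed
      have yex: "\<exists>y\<in>Y (nn i). dist y (c i) \<le> rr * 2 powr (-\<gamma> * real (nn i))" if i: "i \<in> I" for i
      proof -
        have "c i \<in> F" using P1 i by auto
        moreover have "nn i \<ge> J" using nnP[OF i] NJ by auto
        ultimately have "c i \<in> (\<Union>y\<in>Y (nn i). cball y (rr * 2 powr (-\<gamma> * real (nn i))))"
          using cov[of "nn i"] by blast
        then show ?thesis by (auto simp: mem_cball)
      qed
      define yy where "yy i = (SOME y. y \<in> Y (nn i) \<and> dist y (c i) \<le> rr * 2 powr (-\<gamma> * real (nn i)))" for i
      have yyP: "yy i \<in> Y (nn i) \<and> dist (yy i) (c i) \<le> r i" if i: "i \<in> I" for i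
      proof -
        have "yy i \<in> Y (nn i) \<and> dist (yy i) (c i) \<le> rr * 2 powr (-\<gamma> * real (nn i))"
          unfolding yy_def using yex[OF i] by (metis (mono_tags, lifting) someI_ex)
        with nnP[OF i] show ?thesis by auto
      qed
      define h where "h i = (nn i, yy i)" for i
      have injh: "inj_on h I"
      proof (rule inj_onI, rule ccontr)
        fix i i' assume i: "i \<in> I" and i': "i' \<in> I" and eq: "h i = h i'" and ne: "i \<noteq> i'"
        have "yy i \<in> cball (c i) (r i)" using yyP[OF i] by (simp add: dist_commute)
        moreover have "yy i \<in> cball (c i') (r i')" using yyP[OF i'] eq by (simp add: h_def dist_commute)
        ultimately show False using P2 i i' ne by blast
      qed
      have fin_sum: "(\<Sum>i\<in>G. (2 * r i) powr t) \<le> e" if G: "finite G" "G \<subseteq> I" for G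
      proof -
        define M where "M = Max (nn ` G)"
        have "(\<Sum>i\<in>G. (2 * r i) powr t) \<le> (\<Sum>i\<in>G. w (nn i))"
          using G wb by (intro sum_mono) auto
        also have "\<dots> = (\<Sum>p\<in>h ` G. w (fst p))"
          using injh G by (subst sum.reindex) (auto simp: h_def intro: inj_on_subset)
        also have "\<dots> \<le> (\<Sum>p\<in>(SIGMA n:{N..M}. Y n). w (fst p))"
        proof (rule sum_mono2)
          show "finite (SIGMA n:{N..M}. Y n)" using fin by auto
          show "h ` G \<subseteq> (SIGMA n:{N..M}. Y n)"
            using G nnP yyP by (auto simp: h_def M_def)
        qed (auto simp: w0)
        also have "\<dots> = (\<Sum>(n,y)\<in>(SIGMA n:{N..M}. Y n). w n)"
          by (simp add: case_prod_unfold)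
        also have "\<dots> = (\<Sum>n\<in>{N..M}. \<Sum>y\<in>Y n. w n)"
          by (rule sum.Sigma[symmetric]) (auto simp: fin)
        also have "\<dots> = (\<Sum>n\<in>{N..M}. real (card (Y n)) * w n)" by simp
        also have "\<dots> \<le> (\<Sum>n\<in>{N..M}. K * q ^ n)" by (intro sum_mono cw)
        also have "\<dots> = K * (\<Sum>n\<in>{N..M}. q ^ n)" by (simp add: sum_distrib_left)
        also have "\<dots> \<le> K * (q ^ N / (1 - q))"
          using geom_tail[of q N M] q0 q1 K0 by (intro mult_left_mono) auto
        finally show ?thesis using Ne by simp
      qed
      show "(\<Sum>\<^sub>\<infinity>i\<in>I. ennreal ((2 * r i) powr t)) \<le> ennreal e"
      proof (rule infsum_le_finite_sums)
        show "(\<lambda>i. ennreal ((2 * r i) powr t)) summable_on I"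
          by (rule nonneg_summable_on_complete) simp
        fix G assume "finite G" "G \<subseteq> I"
        then show "(\<Sum>i\<in>G. ennreal ((2 * r i) powr t)) \<le> ennreal e"
          using fin_sum by (simp add: ennreal_leI)
      qed
    qed
    have "packing_premeasure t F \<le> packing_pre t \<delta> F"
      unfolding packing_premeasure_def using \<delta>0 by (intro INF_lower) auto
    with pre show ?thesis by simp
  qed
  have "packing_premeasure t F \<le> 0"
    by (rule ennreal_le_epsilon) (use main in simp)
  then show ?thesis by simp
qed



lemma sum_inv_sq_nat: "(\<Sum>n\<le>M. 1 / (1 + real n)^2) \<le> 2 - 1 / (real M + 1)"
proof (induction M)
  case 0 then show ?case by simp
next
  case (Suc M)
  have e: "1 / (real M + 1) - 1 / (real M + 2) = 1 / ((real M + 1) * (real M + 2))"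
    by (simp add: field_simps)
  have "1 / (real M + 2)^2 \<le> 1 / ((real M + 1) * (real M + 2))"
    by (rule divide_left_mono) (auto simp: power2_eq_square)
  with e have "1 / (real M + 2)^2 \<le> 1 / (real M + 1) - 1 / (real M + 2)" by simp
  with Suc show ?case by (simp add: add.commute)
qed

lemma sum_inv_sq_nat_fin: "finite N \<Longrightarrow> (\<Sum>n\<in>N. 1 / (1 + real n)^2) \<le> 2"
proof -
  assume N: "finite N"
  have "(\<Sum>n\<in>N. 1 / (1 + real n)^2) \<le> (\<Sum>n\<le>Max N. 1 / (1 + real n)^2)"
    using N by (intro sum_mono2) (auto simp: Max_ge)
  also have "\<dots> \<le> 2 - 1 / (real (Max N) + 1)" by (rule sum_inv_sq_nat)
  also have "\<dots> \<le> 2" by simp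
  finally show ?thesis .
qed

lemma sum_inv_sq_int: "finite A \<Longrightarrow> (\<Sum>a\<in>A. 1 / (1 + \<bar>real_of_int a\<bar>)^2) \<le> 4"
proof -
  assume A: "finite A"
  let ?f = "\<lambda>a::int. 1 / (1 + \<bar>real_of_int a\<bar>)^2"
  let ?g = "\<lambda>n::nat. 1 / (1 + real n)^2"
  have "(\<Sum>a\<in>A. ?f a) = (\<Sum>a\<in>A \<inter> {a. a \<ge> 0}. ?f a) + (\<Sum>a\<in>A - {a. a \<ge> 0}. ?f a)"
    by (rule sum.Int_Diff[OF A])
  also have "(\<Sum>a\<in>A \<inter> {a. a \<ge> 0}. ?f a) = (\<Sum>n\<in>(\<lambda>a. nat a) ` (A \<inter> {a. a \<ge> 0}). ?g n)"
    by (subst sum.reindex) (auto simp: inj_on_def intro!: sum.cong)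
  also have "\<dots> \<le> 2" using A by (intro sum_inv_sq_nat_fin) auto
  also have "(\<Sum>a\<in>A - {a. a \<ge> 0}. ?f a) = (\<Sum>n\<in>(\<lambda>a. nat (-a)) ` (A - {a. a \<ge> 0}). ?g n)"
    by (subst sum.reindex) (auto simp: inj_on_def intro!: sum.cong)
  also have "\<dots> \<le> 2" using A by (intro sum_inv_sq_nat_fin) auto
  finally show ?thesis by simp
qed

lemma inv_sq_shift:
  fixes u :: real and a :: int
  shows "1 / (1 + \<bar>u - real_of_int a\<bar>)^2 \<le> 4 * (1 / (1 + \<bar>real_of_int (\<lfloor>u\<rfloor> - a)\<bar>)^2)"
proof -
  have "1 + \<bar>real_of_int (\<lfloor>u\<rfloor> - a)\<bar> \<le> 2 * (1 + \<bar>u - real_of_int a\<bar>)"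
    using floor_correct[of u] by (simp add: abs_if) linarith
  then have "(1 + \<bar>real_of_int (\<lfloor>u\<rfloor> - a)\<bar>)^2 \<le> (2 * (1 + \<bar>u - real_of_int a\<bar>))^2"
    by (intro power_mono) auto
  have p1: "0 < 1 + \<bar>real_of_int (\<lfloor>u\<rfloor> - a)\<bar>" by (simp add: add_pos_nonneg)
  have e: "1 / (1 + \<bar>u - real_of_int a\<bar>)^2 = 4 / (2 * (1 + \<bar>u - real_of_int a\<bar>))^2"
  proof -
    have "0 < 1 + \<bar>u - real_of_int a\<bar>" by (simp add: add_pos_nonneg)
    have "1 / Y^2 = 4 / (2 * Y)^2" for Y :: real by (simp add: power_mult_distrib)
    then show ?thesis by blast
  qed
  also have "\<dots> \<le> 4 / (1 + \<bar>real_of_int (\<lfloor>u\<rfloor> - a)\<bar>)^2"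
    by (rule divide_left_mono) (use \<open>(1 + _)^2 \<le> _\<close> p1 in auto)
  finally show ?thesis by simp
qed

lemma sum_inv_sq_real: "finite A \<Longrightarrow> (\<Sum>a\<in>A. 1 / (1 + \<bar>u - real_of_int a\<bar>)^2) \<le> 16"
proof -
  assume A: "finite A"
  have "(\<Sum>a\<in>A. 1 / (1 + \<bar>u - real_of_int a\<bar>)^2)
     \<le> (\<Sum>a\<in>A. 4 * (1 / (1 + \<bar>real_of_int (\<lfloor>u\<rfloor> - a)\<bar>)^2))"
    by (intro sum_mono inv_sq_shift)
  also have "\<dots> = 4 * (\<Sum>b\<in>(\<lambda>a. \<lfloor>u\<rfloor> - a) ` A. 1 / (1 + \<bar>real_of_int b\<bar>)^2)"
    by (subst sum.reindex) (auto simp: inj_on_def sum_distrib_left)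
  also have "\<dots> \<le> 4 * 4" using A by (intro mult_left_mono sum_inv_sq_int) auto
  finally show ?thesis by simp
qed

lemma lattice_bound:
  fixes y :: "real^'n::finite" and G :: "(int^'n) set"
  assumes G: "finite G"
  shows "(\<Sum>k\<in>G. 1 / (1 + infnorm (y - ivec k)) ^ (2*CARD('n))) \<le> 16 ^ CARD('n)"
proof -
  define S where "S m = (\<lambda>k. k $ m) ` G" for m
  have pw: "1 / (1 + infnorm (y - ivec k)) ^ (2*CARD('n)) \<le> (\<Prod>m\<in>UNIV. 1 / (1 + \<bar>y $ m - real_of_int (k $ m)\<bar>)^2)" for k
  proof -
    have "(\<Prod>m\<in>UNIV. (1 + \<bar>y $ m - real_of_int (k $ m)\<bar>)^2) \<le> (\<Prod>m\<in>(UNIV::'n set). (1 + infnorm (y - ivec k))^2)"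
    proof (intro prod_mono conjI)
      fix m :: 'n
      have "\<bar>(y - ivec k) $ m\<bar> \<le> infnorm (y - ivec k)" by (rule component_le_infnorm_cart)
      then have "\<bar>y $ m - real_of_int (k $ m)\<bar> \<le> infnorm (y - ivec k)" by (simp add: ivec_def)
      then show "(1 + \<bar>y $ m - real_of_int (k $ m)\<bar>)^2 \<le> (1 + infnorm (y - ivec k))^2"
        by (intro power_mono) auto
    qed auto
    also have "\<dots> = (1 + infnorm (y - ivec k)) ^ (2*CARD('n))"
      by (simp add: power_mult[symmetric] mult.commute)
    finally have le: "(\<Prod>m\<in>UNIV. (1 + \<bar>y $ m - real_of_int (k $ m)\<bar>)^2) \<le> (1 + infnorm (y - ivec k)) ^ (2*CARD('n))" .
    have pos: "0 < (\<Prod>m\<in>(UNIV::'n set). (1 + \<bar>y $ m - real_of_int (k $ m)\<bar>)^2)"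
      by (intro prod_pos) (auto simp: add_pos_nonneg)
    have "1 / (1 + infnorm (y - ivec k)) ^ (2*CARD('n)) \<le> 1 / (\<Prod>m\<in>UNIV. (1 + \<bar>y $ m - real_of_int (k $ m)\<bar>)^2)"
      using le pos by (intro divide_left_mono) auto
    also have "\<dots> = (\<Prod>m\<in>UNIV. 1 / (1 + \<bar>y $ m - real_of_int (k $ m)\<bar>)^2)"
      by (simp add: prod_dividef)
    finally show ?thesis .
  qed
  have "(\<Sum>k\<in>G. 1 / (1 + infnorm (y - ivec k)) ^ (2*CARD('n)))
      \<le> (\<Sum>k\<in>G. \<Prod>m\<in>UNIV. 1 / (1 + \<bar>y $ m - real_of_int (k $ m)\<bar>)^2)"
    by (intro sum_mono pw)
  also have "\<dots> = (\<Sum>g\<in>(\<lambda>k. \<lambda>m. k $ m) ` G. \<Prod>m\<in>UNIV. 1 / (1 + \<bar>y $ m - real_of_int (g m)\<bar>)^2)"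
    by (subst sum.reindex) (auto simp: inj_on_def vec_eq_iff)
  also have "\<dots> \<le> (\<Sum>g\<in>PiE UNIV S. \<Prod>m\<in>UNIV. 1 / (1 + \<bar>y $ m - real_of_int (g m)\<bar>)^2)"
    using G by (intro sum_mono2 prod_nonneg) (auto simp: S_def finite_PiE)
  also have "\<dots> = (\<Prod>m\<in>UNIV. \<Sum>a\<in>S m. 1 / (1 + \<bar>y $ m - real_of_int a\<bar>)^2)"
    by (rule prod_sum_PiE[symmetric]) (auto simp: S_def G)
  also have "\<dots> \<le> (\<Prod>m\<in>(UNIV::'n set). 16)"
    by (intro prod_mono conjI sum_nonneg sum_inv_sq_real) (auto simp: S_def G)
  also have "\<dots> = 16 ^ CARD('n)" by simp
  finally show ?thesis .
qed



lemma coef_sum_bound: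
  fixes \<psi> :: "real^'n::finite \<Rightarrow> complex" and c :: "int^'n \<Rightarrow> complex"
  assumes dec: "\<And>z. norm (\<psi> z) \<le> C * (1 + infnorm z) powr (- real (2*CARD('n) + M))"
    and cb: "\<And>k. norm (c k) \<le> Bc" and R: "R > 0" and T: "T \<ge> 0"
    and near: "\<And>k. infnorm (y - ivec k) \<le> R \<Longrightarrow> norm (c k) < T"
  shows "norm (\<Sum>\<^sub>\<infinity>k. c k * \<psi> (y - ivec k)) \<le> C * (T + Bc / R ^ M) * 16 ^ CARD('n)"
proof -
  define d where "d = CARD('n)"
  have "0 \<le> C * (1 + infnorm (0::real^'n)) powr (- real (2*CARD('n) + M))"
    using dec[of 0] norm_ge_zero order_trans by blast
  then have C0: "C \<ge> 0" by (simp add: zero_le_mult_iff infnorm_0)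
  have Bc0: "Bc \<ge> 0" using cb[of 0] norm_ge_zero order_trans by blast
  define K where "K = C * (T + Bc / R ^ M)"
  have K0: "K \<ge> 0" using C0 Bc0 T R by (simp add: K_def)
  define g where "g k = K / (1 + infnorm (y - ivec k)) ^ (2*d)" for k
  have trm: "norm (c k * \<psi> (y - ivec k)) \<le> g k" for k
  proof -
    define u where "u = 1 + infnorm (y - ivec k)"
    have u1: "u \<ge> 1" by (simp add: u_def infnorm_pos_le)
    have "norm (\<psi> (y - ivec k)) \<le> C * u powr (- real (2*d + M))"
      using dec by (simp add: u_def d_def)
    also have "u powr (- real (2*d + M)) = 1 / (u ^ (2*d) * u ^ M)"
    proof -
      have e1: "u powr real (2*d+M) = u^(2*d+M)" using u1 by (intro powr_realpow) auto
      show ?thesis by (simp only: powr_minus e1) (simp add: power_add divide_inverse)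
    qed
    finally have ps: "norm (\<psi> (y - ivec k)) \<le> C * (1 / (u ^ (2*d) * u ^ M))" .
    have upos: "u ^ (2*d) > 0" "u ^ M \<ge> 1" using u1 by (auto simp: one_le_power)
    have "norm (c k * \<psi> (y - ivec k)) = norm (c k) * norm (\<psi> (y - ivec k))" by (simp add: norm_mult)
    also have "\<dots> \<le> norm (c k) * (C * (1 / (u ^ (2*d) * u ^ M)))"
      by (intro mult_left_mono ps) auto
    also have "\<dots> \<le> C * (T + Bc / R ^ M) / u ^ (2*d)"
    proof (cases "infnorm (y - ivec k) \<le> R")
      case True
      have "norm (c k) * (C * (1 / (u ^ (2*d) * u ^ M))) = C * (norm (c k) / u ^ M) / u ^ (2*d)"
        by (simp add: field_simps)
      also have "norm (c k) / u ^ M \<le> T + Bc / R ^ M"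
      proof -
        have "norm (c k) / u ^ M \<le> norm (c k) / 1" using upos by (intro frac_le) auto
        also have "\<dots> \<le> T" using near[OF True] by simp
        finally have "norm (c k) / u ^ M \<le> T" .
        moreover have "Bc / R ^ M \<ge> 0" using Bc0 R by simp
        ultimately show ?thesis by linarith
      qed
      then have "C * (norm (c k) / u ^ M) / u ^ (2*d) \<le> C * (T + Bc / R ^ M) / u ^ (2*d)"
        using C0 upos by (intro divide_right_mono mult_left_mono) auto
      finally show ?thesis .
    next
      case False
      then have Ru: "R \<le> u" by (simp add: u_def)
      have "norm (c k) * (C * (1 / (u ^ (2*d) * u ^ M))) = C * (norm (c k) / u ^ M) / u ^ (2*d)"
        by (simp add: field_simps)
      also have "norm (c k) / u ^ M \<le> T + Bc / R ^ M"
      proof -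
        have "R ^ M \<le> u ^ M" using Ru R by (intro power_mono) auto
        then have "norm (c k) / u ^ M \<le> Bc / R ^ M"
          using cb[of k] R Bc0 by (intro frac_le) auto
        then show ?thesis using T by simp
      qed
      then have "C * (norm (c k) / u ^ M) / u ^ (2*d) \<le> C * (T + Bc / R ^ M) / u ^ (2*d)"
        using C0 upos by (intro divide_right_mono mult_left_mono) auto
      finally show ?thesis .
    qed
    finally show ?thesis by (simp add: g_def K_def u_def)
  qed
  have gsum: "sum g G \<le> K * 16 ^ d" if "finite G" for G
  proof -
    have "sum g G = K * (\<Sum>k\<in>G. 1 / (1 + infnorm (y - ivec k)) ^ (2*d))"
      by (simp add: g_def sum_distrib_left)
    also have "\<dots> \<le> K * 16 ^ d"
      using lattice_bound[OF that, of y] K0 by (intro mult_left_mono) (auto simp: d_def)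
    finally show ?thesis .
  qed
  have g0: "g k \<ge> 0" for k using K0 by (simp add: g_def infnorm_pos_le)
  have gs: "g summable_on UNIV"
    by (rule nonneg_bdd_above_summable_on) (use g0 gsum in \<open>auto intro!: bdd_aboveI\<close>)
  have fs: "(\<lambda>k. c k * \<psi> (y - ivec k)) summable_on UNIV"
  proof (rule abs_summable_summable)
    show "(\<lambda>k. norm (c k * \<psi> (y - ivec k))) summable_on UNIV"
      by (rule summable_on_comparison_test[OF gs]) (use trm in auto)
  qed
  have "norm (\<Sum>\<^sub>\<infinity>k. c k * \<psi> (y - ivec k)) \<le> infsum g UNIV"
    by (rule norm_infsum_le[OF has_sum_infsum[OF fs] has_sum_infsum[OF gs]]) (use trm in auto)
  also have "\<dots> \<le> K * 16 ^ d"
    by (rule infsum_le_finite_sums[OF gs]) (use gsum in auto)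
  finally show ?thesis by (simp add: K_def d_def)
qed



lemma sum_split_lessThan:
  fixes f :: "nat \<Rightarrow> 'a::comm_monoid_add"
  shows "a \<le> b \<Longrightarrow> sum f {..<b} = sum f {..<a} + sum f {a..<b}"
  by (metis atLeast0LessThan sum.atLeastLessThan_concat zero_le)

lemma growth:
  fixes a :: "nat \<Rightarrow> 'a::real_normed_vector"
  assumes nz: "\<forall>\<^sub>F j in sequentially. a j \<noteq> 0"
    and lim: "((\<lambda>j. log 2 (norm (a j)) / real j) \<longlongrightarrow> \<beta>) sequentially"
    and e: "\<epsilon> > 0"
  shows "\<exists>j0. \<forall>j\<ge>j0. 2 powr ((\<beta> - \<epsilon>) * real j) \<le> norm (a j) \<and> norm (a j) \<le> 2 powr ((\<beta> + \<epsilon>) * real j)"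
proof -
  have "\<forall>\<^sub>F j in sequentially. dist (log 2 (norm (a j)) / real j) \<beta> < \<epsilon>"
    using lim e by (rule tendstoD)
  moreover have "\<forall>\<^sub>F j in sequentially. j \<ge> 1" by (rule eventually_ge_at_top)
  ultimately have "\<forall>\<^sub>F j in sequentially. a j \<noteq> 0 \<and> dist (log 2 (norm (a j)) / real j) \<beta> < \<epsilon> \<and> j \<ge> 1"
    using nz by eventually_elim auto
  then obtain j0 where j0: "\<And>j. j \<ge> j0 \<Longrightarrow> a j \<noteq> 0 \<and> dist (log 2 (norm (a j)) / real j) \<beta> < \<epsilon> \<and> j \<ge> 1"
    by (auto simp: eventually_sequentially)
  show ?thesis
  proof (intro exI allI impI)
    fix j assume "j \<ge> j0"
    note h = j0[OF this]
    have jp: "real j > 0" using h by auto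
    have np: "norm (a j) > 0" using h by auto
    define L where "L = log 2 (norm (a j))"
    have "\<bar>L / real j - \<beta>\<bar> < \<epsilon>" using h by (simp add: dist_real_def L_def)
    then have "\<bar>L - \<beta> * real j\<bar> < \<epsilon> * real j" using jp
      by (simp add: abs_less_iff field_simps)
    then have b1: "(\<beta> - \<epsilon>) * real j \<le> L" and b2: "L \<le> (\<beta> + \<epsilon>) * real j"
      by (auto simp: algebra_simps abs_less_iff)
    have nL: "norm (a j) = 2 powr L" using np by (simp add: L_def)
    show "2 powr ((\<beta> - \<epsilon>) * real j) \<le> norm (a j) \<and> norm (a j) \<le> 2 powr ((\<beta> + \<epsilon>) * real j)"
      unfolding nL using b1 b2 by auto
  qed
qed

lemma gap:
  fixes a b \<epsilon> :: real
  assumes "\<epsilon> > 0" "a - b \<ge> \<epsilon>"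
  shows "\<exists>n0. \<forall>n\<ge>n0. 2 powr (b * real n) \<le> 2 powr (a * real n) / 2"
proof -
  have "((\<lambda>n::nat. 2 powr (-\<epsilon> * real n)) \<longlongrightarrow> 0) sequentially" using assms(1) by real_asymp
  then have "\<forall>\<^sub>F n in sequentially. 2 powr (-\<epsilon> * real n) < 1/2" by (rule order_tendstoD) simp
  then obtain n0 where n0: "\<And>n. n \<ge> n0 \<Longrightarrow> 2 powr (-\<epsilon> * real n) < 1/2"
    by (auto simp: eventually_sequentially)
  show ?thesis
  proof (intro exI allI impI)
    fix n assume "n \<ge> n0"
    have "(\<epsilon> + b) * real n \<le> a * real n" using assms by (intro mult_right_mono) auto
    then have "b * real n \<le> a * real n + (-\<epsilon> * real n)" by (simp add: algebra_simps)
    then have "2 powr (b * real n) \<le> 2 powr (a * real n + (-\<epsilon> * real n))" by simp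
    also have "\<dots> = 2 powr (a * real n) * 2 powr (-\<epsilon> * real n)" by (rule powr_add)
    also have "\<dots> \<le> 2 powr (a * real n) * (1/2)"
      using n0[OF \<open>n \<ge> n0\<close>] by (intro mult_left_mono) auto
    finally show "2 powr (b * real n) \<le> 2 powr (a * real n) / 2" by simp
  qed
qed

lemma pigeon:
  fixes Q :: "nat \<Rightarrow> 'a::real_normed_vector"
  assumes "n \<ge> 1" "norm (\<Sum>l\<in>{a..<a+n}. Q l) \<ge> X"
  shows "\<exists>l\<in>{a..<a+n}. norm (Q l) \<ge> X / real n"
proof (rule ccontr)
  assume "\<not> ?thesis"
  then have lt: "\<And>l. l \<in> {a..<a+n} \<Longrightarrow> norm (Q l) < X / real n" by force
  have "norm (\<Sum>l\<in>{a..<a+n}. Q l) \<le> (\<Sum>l\<in>{a..<a+n}. norm (Q l))" by (rule norm_sum)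
  also have "\<dots> < (\<Sum>l\<in>{a..<a+n}. X / real n)"
    using assms(1) lt by (intro sum_strict_mono) auto
  also have "\<dots> = X" using assms(1) by simp
  finally show False using assms(2) by simp
qed



lemma level_good:
  fixes \<phi> :: "real^'n::finite \<Rightarrow> complex" and \<psi> :: "nat \<Rightarrow> real^'n \<Rightarrow> complex"
  assumes x: "x \<in> level_set \<phi> \<psi> \<beta> f" and m: "m \<ge> 1" and e: "\<epsilon> > 0"
    and eb: "\<epsilon> * (2 * real m + 2) \<le> \<bar>\<beta>\<bar>"
  shows "\<exists>J. \<forall>n\<ge>J. norm (\<Sum>l\<in>{m*n..<m*n+n}. Qop \<psi> f l x) \<ge> 2 powr ((\<beta> - \<epsilon>) * (real m + 1) * real n) / 2"
proof (cases "\<beta> > 0")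
  case True
  let ?P = "\<lambda>j. Pop \<phi> \<psi> f j x"
  from x True have nz: "\<forall>\<^sub>F j in sequentially. ?P j \<noteq> 0"
    and lim: "((\<lambda>j. log 2 (norm (?P j)) / real j) \<longlongrightarrow> \<beta>) sequentially"
    by (auto simp: level_set_def)
  obtain j0 where j0: "\<And>j. j \<ge> j0 \<Longrightarrow> 2 powr ((\<beta> - \<epsilon>) * real j) \<le> norm (?P j) \<and> norm (?P j) \<le> 2 powr ((\<beta> + \<epsilon>) * real j)"
    using growth[OF nz lim e] by blast
  have "(\<beta> - \<epsilon>) * (real m + 1) - (\<beta> + \<epsilon>) * real m \<ge> \<epsilon>"
    using eb True by (simp add: algebra_simps)
  then obtain n0 where n0: "\<And>n. n \<ge> n0 \<Longrightarrow> 2 powr ((\<beta> + \<epsilon>) * real m * real n) \<le> 2 powr ((\<beta> - \<epsilon>) * (real m + 1) * real n) / 2"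
    using gap[OF e, where b="(\<beta> + \<epsilon>) * real m" and a="(\<beta> - \<epsilon>) * (real m + 1)"] by (auto simp: mult.assoc)
  show ?thesis
  proof (intro exI allI impI)
    fix n assume n: "n \<ge> max j0 n0"
    have a1: "m * n \<ge> j0" using n m by (metis max.bounded_iff mult_le_mono1 mult_1 order_trans)
    have a2: "m * n + n \<ge> j0" using a1 by linarith
    have deq: "?P (m*n+n) - ?P (m*n) = (\<Sum>l\<in>{m*n..<m*n+n}. Qop \<psi> f l x)"
      unfolding Pop_def using sum_split_lessThan[of "m*n" "m*n+n" "\<lambda>l. Qop \<psi> f l x"] by simp
    have "norm (?P (m*n+n) - ?P (m*n)) \<ge> norm (?P (m*n+n)) - norm (?P (m*n))"
      by (rule norm_triangle_ineq2)
    moreover have "norm (?P (m*n+n)) \<ge> 2 powr ((\<beta> - \<epsilon>) * (real m + 1) * real n)"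
      using j0[OF a2] by (simp add: algebra_simps)
    moreover have "norm (?P (m*n)) \<le> 2 powr ((\<beta> + \<epsilon>) * real m * real n)"
      using j0[OF a1] by (simp add: algebra_simps)
    moreover have "2 powr ((\<beta> + \<epsilon>) * real m * real n) \<le> 2 powr ((\<beta> - \<epsilon>) * (real m + 1) * real n) / 2"
      using n0 n by auto
    ultimately show "norm (\<Sum>l\<in>{m*n..<m*n+n}. Qop \<psi> f l x) \<ge> 2 powr ((\<beta> - \<epsilon>) * (real m + 1) * real n) / 2"
      unfolding deq[symmetric] by linarith
  qed
next
  case False
  have "\<epsilon> * (2 * real m + 2) > 0" using e by (intro mult_pos_pos) auto
  with False eb have bneg: "\<beta> < 0" by (cases "\<beta> = 0") auto
  let ?P = "\<lambda>j. Pop \<phi> \<psi> f j x"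
  let ?R = "\<lambda>j. Rop \<psi> f j x"
  let ?Q = "\<lambda>l. Qop \<psi> f l x"
  from x bneg have cv: "convergent ?P" and nz: "\<forall>\<^sub>F j in sequentially. ?R j \<noteq> 0"
    and lim: "((\<lambda>j. log 2 (norm (?R j)) / real j) \<longlongrightarrow> \<beta>) sequentially"
    by (auto simp: level_set_def)
  have "convergent (\<lambda>j. ?P j - (\<Sum>\<^sub>\<infinity>k. scal_coef \<phi> f k * \<phi> (x - ivec k)))"
    using cv by (intro convergent_diff convergent_const)
  then have "convergent (\<lambda>j. \<Sum>l<j. ?Q l)" by (simp add: Pop_def)
  then have sm: "summable ?Q" by (simp add: summable_iff_convergent)
  have Req: "?R j = suminf ?Q - (\<Sum>l<j. ?Q l)" for j
    unfolding Rop_def using suminf_minus_initial_segment[OF sm, of j] by (simp add: add.commute)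
  obtain j0 where j0: "\<And>j. j \<ge> j0 \<Longrightarrow> 2 powr ((\<beta> - \<epsilon>) * real j) \<le> norm (?R j) \<and> norm (?R j) \<le> 2 powr ((\<beta> + \<epsilon>) * real j)"
    using growth[OF nz lim e] by blast
  have "(\<beta> - \<epsilon>) * real m - (\<beta> + \<epsilon>) * (real m + 1) \<ge> \<epsilon>"
    using eb bneg by (simp add: algebra_simps)
  then obtain n0 where n0: "\<And>n. n \<ge> n0 \<Longrightarrow> 2 powr ((\<beta> + \<epsilon>) * (real m + 1) * real n) \<le> 2 powr ((\<beta> - \<epsilon>) * real m * real n) / 2"
    using gap[OF e, where b="(\<beta> + \<epsilon>) * (real m + 1)" and a="(\<beta> - \<epsilon>) * real m"] by (auto simp: mult.assoc)
  show ?thesis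
  proof (intro exI allI impI)
    fix n assume n: "n \<ge> max j0 n0"
    have a1: "m * n \<ge> j0" using n m by (metis max.bounded_iff mult_le_mono1 mult_1 order_trans)
    have a2: "m * n + n \<ge> j0" using a1 by linarith
    have deq: "?R (m*n) - ?R (m*n+n) = (\<Sum>l\<in>{m*n..<m*n+n}. ?Q l)"
      unfolding Req using sum_split_lessThan[of "m*n" "m*n+n" ?Q] by simp
    have "norm (?R (m*n) - ?R (m*n+n)) \<ge> norm (?R (m*n)) - norm (?R (m*n+n))"
      by (rule norm_triangle_ineq2)
    moreover have "norm (?R (m*n)) \<ge> 2 powr ((\<beta> - \<epsilon>) * real m * real n)"
      using j0[OF a1] by (simp add: algebra_simps)
    moreover have "norm (?R (m*n+n)) \<le> 2 powr ((\<beta> + \<epsilon>) * (real m + 1) * real n)"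
      using j0[OF a2] by (simp add: algebra_simps)
    moreover have "2 powr ((\<beta> + \<epsilon>) * (real m + 1) * real n) \<le> 2 powr ((\<beta> - \<epsilon>) * real m * real n) / 2"
      using n0 n by auto
    moreover have "2 powr ((\<beta> - \<epsilon>) * (real m + 1) * real n) \<le> 2 powr ((\<beta> - \<epsilon>) * real m * real n)"
    proof -
      have "(\<beta> - \<epsilon>) * real n \<le> 0" using bneg e by (simp add: mult_nonpos_nonneg)
      then have "(\<beta> - \<epsilon>) * (real m + 1) * real n \<le> (\<beta> - \<epsilon>) * real m * real n"
        by (simp add: algebra_simps)
      then show ?thesis by simp
    qed
    ultimately show "norm (\<Sum>l\<in>{m*n..<m*n+n}. ?Q l) \<ge> 2 powr ((\<beta> - \<epsilon>) * (real m + 1) * real n) / 2"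
      unfolding deq[symmetric] by linarith
  qed
qed



lemma fsum_le_infsum:
  fixes g :: "'a \<Rightarrow> real"
  assumes "g summable_on UNIV" "\<And>k. g k \<ge> 0" "finite G"
  shows "sum g G \<le> infsum g UNIV"
proof -
  have "infsum g G \<le> infsum g UNIV"
    using assms by (intro infsum_mono2) auto
  then show ?thesis using assms(3) by simp
qed

lemma count_le:
  fixes a :: "'a \<Rightarrow> complex"
  assumes sm: "(\<lambda>k. norm (a k) powr p) summable_on UNIV" and p: "p > 0" and T: "T > 0"
  shows "finite {k. T \<le> norm (a k)}"
    "real (card {k. T \<le> norm (a k)}) * T powr p \<le> (\<Sum>\<^sub>\<infinity>k. norm (a k) powr p)"
proof -
  let ?A = "{k. T \<le> norm (a k)}"
  let ?S = "(\<Sum>\<^sub>\<infinity>k. norm (a k) powr p)"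
  have G: "real (card G) * T powr p \<le> ?S" if "finite G" "G \<subseteq> ?A" for G
  proof -
    have "real (card G) * T powr p = (\<Sum>k\<in>G. T powr p)" by simp
    also have "\<dots> \<le> (\<Sum>k\<in>G. norm (a k) powr p)"
      using that T p by (intro sum_mono powr_mono2) auto
    also have "\<dots> \<le> ?S" by (rule fsum_le_infsum[OF sm _ that(1)]) simp
    finally show ?thesis .
  qed
  show fin: "finite ?A"
  proof (rule ccontr)
    assume inf: "infinite ?A"
    define N where "N = nat \<lceil>?S / T powr p\<rceil> + 1"
    obtain G where "finite G" "card G = N" "G \<subseteq> ?A"
      using infinite_arbitrarily_large[OF inf] by blast
    then have "real N * T powr p \<le> ?S" using G by auto
    moreover have "real N > ?S / T powr p" unfolding N_def by linarith
    ultimately show False using T by (simp add: field_simps)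
  qed
  show "real (card ?A) * T powr p \<le> ?S" using G[OF fin] by simp
qed

lemma tot_bound:
  fixes Tot B \<sigma> p :: real
  assumes T0: "Tot \<ge> 0" and p: "p > 0" and b: "2 powr (\<sigma> * l) * Tot powr (1/p) \<le> B"
  shows "Tot powr (1/p) \<le> B * 2 powr (-\<sigma> * l)" "B \<ge> 0" "Tot \<le> B powr p * 2 powr (-\<sigma> * p * l)"
proof -
  have "Tot powr (1/p) = 2 powr (-\<sigma> * l) * (2 powr (\<sigma> * l) * Tot powr (1/p))"
    by (simp add: powr_add[symmetric])
  also have "\<dots> \<le> 2 powr (-\<sigma> * l) * B" using b by (intro mult_left_mono) auto
  finally show i: "Tot powr (1/p) \<le> B * 2 powr (-\<sigma> * l)" by (simp add: mult.commute)
  have "0 \<le> Tot powr (1/p)" by simp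
  then have "0 \<le> B * 2 powr (-\<sigma> * l)" using i by linarith
  then show B0: "B \<ge> 0" by (simp add: zero_le_mult_iff)
  have "Tot = (Tot powr (1/p)) powr p" using T0 p by (simp add: powr_powr)
  also have "\<dots> \<le> (B * 2 powr (-\<sigma> * l)) powr p" using i p by (intro powr_mono2) auto
  also have "\<dots> = B powr p * 2 powr (-\<sigma> * p * l)" using B0 by (simp add: powr_mult powr_powr mult_ac)
  finally show "Tot \<le> B powr p * 2 powr (-\<sigma> * p * l)" .
qed

lemma dim_le:
  fixes E :: "'a::metric_space set"
  assumes l0: "l0 \<ge> 0" and z: "\<And>t. t > l0 \<Longrightarrow> packing_measure t E = 0"
  shows "packing_dim E \<le> l0"
proof -
  let ?S = "{t. 0 \<le> t \<and> packing_measure t E = 0}"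
  have bb: "bdd_below ?S" by (rule bdd_belowI[of _ 0]) auto
  have "Inf ?S \<le> l0 + e" if "e > 0" for e
    using that l0 z[of "l0 + e"] by (intro cInf_lower bb) auto
  then show ?thesis unfolding packing_dim_def by (rule field_le_epsilon)
qed

lemma measure_zero_cover:
  fixes E :: "'a::metric_space set" and F :: "nat \<Rightarrow> 'a set"
  assumes "E \<subseteq> (\<Union>J. F J)" "\<And>J. packing_premeasure t (F J) = 0"
  shows "packing_measure t E = 0"
proof -
  have "packing_measure t E \<le> (\<Sum>J. packing_premeasure t (F J))"
    unfolding packing_measure_def using assms(1) by (intro INF_lower) auto
  then show ?thesis using assms(2) by simp
qed

lemma params:
  fixes l0 t p K \<beta> :: real
  assumes l0: "0 \<le> l0" and lt: "l0 < t" and p: "p > 0" and K: "K \<ge> 0" and b: "\<beta> \<noteq> 0"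
  shows "\<exists>\<eta> \<epsilon> (m::nat). 0 < \<eta> \<and> \<eta> < 1 \<and> 0 < \<epsilon> \<and> m \<ge> 1 \<and> \<epsilon> * (2 * real m + 2) \<le> \<bar>\<beta>\<bar>
     \<and> (real m + 1) * (l0 + 2 * p * \<epsilon>) + K + 1 < t * ((1 - \<eta>) * real m)"
proof -
  define \<theta> where "\<theta> = t - l0"
  have th: "\<theta> > 0" "\<theta> \<le> t" using lt l0 by (auto simp: \<theta>_def)
  define \<eta> where "\<eta> = \<theta> / (2 * (t + 1))"
  have t0: "t > 0" using l0 lt by linarith
  have e0: "\<eta> > 0" using th t0 by (simp add: \<eta>_def)
  have e1: "\<eta> < 1" using th t0 by (simp add: \<eta>_def field_simps)
  have teta: "t * \<eta> \<le> \<theta> / 2"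
  proof -
    have "t * \<eta> = (\<theta> / 2) * (t / (t + 1))" by (simp add: \<eta>_def field_simps)
    also have "\<dots> \<le> (\<theta> / 2) * 1" using th t0 by (intro mult_left_mono) auto
    finally show ?thesis by simp
  qed
  define m :: nat where "m = nat \<lceil>8 * (l0 + \<theta> + K + 2) / \<theta>\<rceil> + 1"
  have m1: "m \<ge> 1" by (simp add: m_def)
  have "real m \<ge> 8 * (l0 + \<theta> + K + 2) / \<theta>" unfolding m_def by linarith
  then have mth: "real m * \<theta> \<ge> 8 * (l0 + \<theta> + K + 2)" using th by (simp add: field_simps)
  define \<epsilon> where "\<epsilon> = min (\<theta> / (16 * p)) (\<bar>\<beta>\<bar> / (2 * real m + 2))"
  have eps0: "\<epsilon> > 0" using th p b by (simp add: \<epsilon>_def)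
  have eb: "\<epsilon> * (2 * real m + 2) \<le> \<bar>\<beta>\<bar>"
  proof -
    have "\<epsilon> \<le> \<bar>\<beta>\<bar> / (2 * real m + 2)" by (simp add: \<epsilon>_def)
    then show ?thesis by (simp add: field_simps)
  qed
  have pe: "2 * p * \<epsilon> \<le> \<theta> / 8"
  proof -
    have "\<epsilon> \<le> \<theta> / (16 * p)" by (simp add: \<epsilon>_def)
    then show ?thesis using p by (simp add: field_simps)
  qed
  have "(real m + 1) * (l0 + 2 * p * \<epsilon>) \<le> (real m + 1) * (l0 + \<theta> / 8)"
    using pe by (intro mult_left_mono) auto
  moreover have "t * ((1 - \<eta>) * real m) = (t - t * \<eta>) * real m" by (simp add: algebra_simps)
  moreover have "(t - t * \<eta>) * real m \<ge> (l0 + \<theta> / 2) * real m"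
  proof -
    have "l0 + \<theta> / 2 \<le> t - t * \<eta>" using teta unfolding \<theta>_def by (simp add: field_simps)
    then show ?thesis by (intro mult_right_mono) auto
  qed
  moreover have "(real m + 1) * (l0 + \<theta> / 8) + K + 1 < (l0 + \<theta> / 2) * real m"
  proof -
    have a: "(real m + 1) * (l0 + \<theta> / 8) + K + 1 = real m * l0 + (real m * \<theta>) / 8 + l0 + \<theta> / 8 + K + 1"
      by (simp add: algebra_simps)
    have b: "(l0 + \<theta> / 2) * real m = real m * l0 + (real m * \<theta>) / 2" by (simp add: algebra_simps)
    show ?thesis unfolding a b using mth th l0 K by (simp add: field_simps)
  qed
  ultimately have "(real m + 1) * (l0 + 2 * p * \<epsilon>) + K + 1 < t * ((1 - \<eta>) * real m)"
    by linarith
  then show ?thesis using e0 e1 eps0 m1 eb by blast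
qed



lemma poly_exp:
  fixes c A :: real
  assumes "c > 0"
  shows "\<exists>n0. \<forall>n\<ge>n0. A * real n < 2 powr (c * real n)"
proof -
  have "((\<lambda>n::nat. A * real n / 2 powr (c * real n)) \<longlongrightarrow> 0) sequentially"
    using assms by real_asymp
  then have "\<forall>\<^sub>F n in sequentially. A * real n / 2 powr (c * real n) < 1"
    by (rule order_tendstoD) simp
  then obtain n0 where n0: "\<And>n. n \<ge> n0 \<Longrightarrow> A * real n / 2 powr (c * real n) < 1"
    by (auto simp: eventually_sequentially)
  show ?thesis
  proof (intro exI allI impI)
    fix n assume "n \<ge> n0"
    from n0[OF this] show "A * real n < 2 powr (c * real n)" by (simp add: divide_less_eq)
  qed
qed

theorem proposition3p3:
  fixes V :: "int \<Rightarrow> (real^'n::finite \<Rightarrow> complex) set"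
    and \<phi> :: "real^'n \<Rightarrow> complex"
    and \<psi> :: "nat \<Rightarrow> real^'n \<Rightarrow> complex"
    and s p \<beta> :: real
    and f :: "real^'n \<Rightarrow> complex"
  assumes "ortho_mra V \<phi>"
    and "assoc_wavelets V \<psi>"
    and "Cdecay (nat \<lfloor>s\<rfloor> + 1) \<phi>"
    and "\<forall>i\<in>wav_idx TYPE('n). Cdecay (nat \<lfloor>s\<rfloor> + 1) (\<psi> i)"
    and "0 \<le> s"
    and "1 \<le> p"
    and "- s \<le> \<beta>" and "\<beta> \<le> real CARD('n) / p - s" and "\<beta> \<noteq> 0"
    and "f \<in> besov_inf \<phi> \<psi> s p"
  shows "packing_dim (level_set \<phi> \<psi> \<beta> f) \<le> real CARD('n) - s * p - \<beta> * p"
proof -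
  define d where "d = CARD('n)"
  define idx where "idx = wav_idx TYPE('n)"
  have fin_idx: "finite idx" by (simp add: idx_def wav_idx_def)
  define c where "c i l k = wav_coef \<psi> f i l k" for i l k
  have p0: "p > 0" using assms(6) by simp
  from assms(10) have sumS: "\<And>i l. i \<in> idx \<Longrightarrow> (\<lambda>k. norm (c i l k) powr p) summable_on UNIV"
    and bdd: "bdd_above (range (\<lambda>j. 2 powr ((s - real d / p) * real j) *
        (\<Sum>i\<in>idx. \<Sum>\<^sub>\<infinity>k. norm (c i j k) powr p) powr (1 / p)))"
    by (auto simp: besov_inf_def c_def idx_def d_def)
  then obtain B where Bb: "\<And>l. 2 powr ((s - real d / p) * real l) * (\<Sum>i\<in>idx. \<Sum>\<^sub>\<infinity>k. norm (c i l k) powr p) powr (1/p) \<le> B"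
    by (auto simp: bdd_above_def)
  define Tot where "Tot l = (\<Sum>i\<in>idx. \<Sum>\<^sub>\<infinity>k. norm (c i l k) powr p)" for l
  have Tot0: "Tot l \<ge> 0" for l unfolding Tot_def by (intro sum_nonneg infsum_nonneg) auto
  note tb = tot_bound[OF Tot0 p0 Bb[folded Tot_def]]
  have B0: "B \<ge> 0" using tb(2) .
  have TotB: "Tot l \<le> B powr p * 2 powr ((real d - s * p) * real l)" for l
  proof -
    have eq: "-(s - real d / p) * p * real l = (real d - s * p) * real l" using p0 by (simp add: field_simps)
    show ?thesis using tb(3)[of l] by (simp only: eq)
  qed
  have cB: "norm (c i l k) \<le> B * 2 powr ((real d / p - s) * real l)" if i: "i \<in> idx" for i l k
  proof -
    have "norm (c i l k) powr p \<le> (\<Sum>\<^sub>\<infinity>k. norm (c i l k) powr p)"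
      using fsum_le_infsum[OF sumS[OF i], where G="{k}"] by simp
    also have "\<dots> \<le> Tot l" unfolding Tot_def
      by (rule member_le_sum[OF i _ fin_idx]) (auto intro: infsum_nonneg)
    finally have "norm (c i l k) powr p \<le> Tot l" .
    then have "(norm (c i l k) powr p) powr (1/p) \<le> Tot l powr (1/p)"
      using p0 by (intro powr_mono2) auto
    then have "norm (c i l k) \<le> Tot l powr (1/p)" using p0 by (simp add: powr_powr)
    also have "\<dots> \<le> B * 2 powr (-(s - real d / p) * real l)" by (rule tb(1))
    finally show ?thesis by (simp add: algebra_simps)
  qed
  have cfin: "finite {k. T \<le> norm (c i l k)}" if "T > 0" "i \<in> idx" for T i l
    using count_le(1)[OF sumS[OF that(2)] p0 that(1)] .
  have cnt: "(\<Sum>i\<in>idx. real (card {k. T \<le> norm (c i l k)})) * T powr p \<le> Tot l" if T: "T > 0" for T l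
  proof -
    have "(\<Sum>i\<in>idx. real (card {k. T \<le> norm (c i l k)})) * T powr p
        = (\<Sum>i\<in>idx. real (card {k. T \<le> norm (c i l k)}) * T powr p)" by (simp add: sum_distrib_right)
    also have "\<dots> \<le> Tot l" unfolding Tot_def
      by (intro sum_mono count_le(2)[OF sumS p0 T])
    finally show ?thesis .
  qed
  have dec1: "fast_decay (\<psi> i)" if i: "i \<in> idx" for i
  proof -
    have "Cdecay (Suc (nat \<lfloor>s\<rfloor>)) (\<psi> i)" using assms(4) i by (simp add: idx_def)
    then show ?thesis by simp
  qed
  have decay: "\<exists>C. \<forall>i\<in>idx. \<forall>z. norm (\<psi> i z) \<le> C * (1 + infnorm z) powr (- real N)" for N :: nat
  proof -
    have "\<forall>i\<in>idx. \<exists>C. \<forall>z. norm (\<psi> i z) \<le> C * (1 + infnorm z) powr (- real N)"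
      using dec1 by (auto simp: fast_decay_def)
    then obtain Cf where Cf: "\<And>i z. i \<in> idx \<Longrightarrow> norm (\<psi> i z) \<le> Cf i * (1 + infnorm z) powr (- real N)"
      by metis
    show ?thesis
    proof (intro exI ballI allI)
      fix i and z :: "real^'n" assume i: "i \<in> idx"
      have "Cf i \<le> (\<Sum>j\<in>idx. \<bar>Cf j\<bar>)"
        using member_le_sum[OF i _ fin_idx, of "\<lambda>j. \<bar>Cf j\<bar>"] by simp
      then have "Cf i * (1 + infnorm z) powr (- real N) \<le> (\<Sum>j\<in>idx. \<bar>Cf j\<bar>) * (1 + infnorm z) powr (- real N)"
        by (intro mult_right_mono) auto
      with Cf[OF i, of z] show "norm (\<psi> i z) \<le> (\<Sum>j\<in>idx. \<bar>Cf j\<bar>) * (1 + infnorm z) powr (- real N)"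
        by linarith
    qed
  qed
  have "\<forall>M. \<exists>C. \<forall>i\<in>idx. \<forall>z. norm (\<psi> i z) \<le> C * (1 + infnorm z) powr (- real (2*d + M))"
    using decay by blast
  from choice[OF this] obtain CC where
    CC: "\<And>M i z. i \<in> idx \<Longrightarrow> norm (\<psi> i z) \<le> CC M * (1 + infnorm z) powr (- real (2*d + M))"
    by blast
  have Qb: "norm (Qop \<psi> f l x) \<le> real (card idx) * (CC M * (T + B * 2 powr ((real d / p - s) * real l) / R ^ M) * 16 ^ d)"
    if T: "T \<ge> 0" and R: "R > 0"
      and near: "\<And>i k. i \<in> idx \<Longrightarrow> infnorm ((2::real)^l *\<^sub>R x - ivec k) \<le> R \<Longrightarrow> norm (c i l k) < T"
    for l x T R M
  proof -
    have each: "norm (\<Sum>\<^sub>\<infinity>k. c i l k * wav_fun \<psi> i l k x) \<le> CC M * (T + B * 2 powr ((real d / p - s) * real l) / R ^ M) * 16 ^ d"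
      if i: "i \<in> idx" for i
    proof -
      have "norm (\<Sum>\<^sub>\<infinity>k. c i l k * \<psi> i ((2::real)^l *\<^sub>R x - ivec k)) \<le> CC M * (T + B * 2 powr ((real d / p - s) * real l) / R ^ M) * 16 ^ CARD('n)"
        by (rule coef_sum_bound[where \<psi> = "\<psi> i" and c = "c i l" and M = M])
          (use CC[OF i] cB[OF i] near[OF i] R T in \<open>auto simp: d_def\<close>)
      then show ?thesis by (simp add: wav_fun_def d_def)
    qed
    have "norm (Qop \<psi> f l x) \<le> (\<Sum>i\<in>idx. norm (\<Sum>\<^sub>\<infinity>k. c i l k * wav_fun \<psi> i l k x))"
      unfolding Qop_def c_def idx_def by (rule norm_sum)
    also have "\<dots> \<le> (\<Sum>i\<in>idx. CC M * (T + B * 2 powr ((real d / p - s) * real l) / R ^ M) * 16 ^ d)"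
      by (intro sum_mono each)
    finally show ?thesis by simp
  qed
  define l0 where "l0 = real d - s * p - \<beta> * p"
  have l0_nonneg: "l0 \<ge> 0"
  proof -
    have "\<beta> * p \<le> (real d / p - s) * p" using assms(8) p0 by (intro mult_right_mono) (auto simp: d_def)
    moreover have "(real d / p - s) * p = real d - s * p" using p0 by (simp add: field_simps)
    ultimately show ?thesis by (simp add: l0_def)
  qed
  define E where "E = level_set \<phi> \<psi> \<beta> f"
  have key: "packing_measure t E = 0" if tl: "t > l0" for t
  proof -
    define K where "K = \<bar>real d - s * p\<bar>"
    obtain \<eta> \<epsilon> m where e0: "0 < \<eta>" and e1: "\<eta> < 1" and eps: "0 < \<epsilon>" and m1: "m \<ge> 1"
      and eb: "\<epsilon> * (2 * real m + 2) \<le> \<bar>\<beta>\<bar>"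
      and ineq: "(real m + 1) * (l0 + 2 * p * \<epsilon>) + K + 1 < t * ((1 - \<eta>) * real m)"
      using params[OF l0_nonneg tl p0 _ assms(9), of K] by (auto simp: K_def)
    define \<kappa> where "\<kappa> = real d / p - s"
    define M :: nat where "M = nat \<lceil>(\<bar>\<kappa>\<bar> * real m + (\<bar>\<beta>\<bar> + 2 * \<epsilon>) * (real m + 1)) / (\<eta> * real m)\<rceil>"
    have em: "\<eta> * real m > 0" using e0 m1 by simp
    have Mb: "\<eta> * real M * real m \<ge> \<bar>\<kappa>\<bar> * real m + (\<bar>\<beta>\<bar> + 2 * \<epsilon>) * (real m + 1)"
    proof -
      have "real M \<ge> (\<bar>\<kappa>\<bar> * real m + (\<bar>\<beta>\<bar> + 2 * \<epsilon>) * (real m + 1)) / (\<eta> * real m)"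
        unfolding M_def by linarith
      then have "real M * (\<eta> * real m) \<ge> \<bar>\<kappa>\<bar> * real m + (\<bar>\<beta>\<bar> + 2 * \<epsilon>) * (real m + 1)"
        using em by (simp add: divide_le_eq)
      then show ?thesis by (simp add: mult_ac)
    qed
    define \<tau> where "\<tau> = (\<beta> - 2 * \<epsilon>) * (real m + 1)"
    define \<gamma> where "\<gamma> = (1 - \<eta>) * real m"
    define \<alpha> where "\<alpha> = (real m + 1) * (l0 + 2 * p * \<epsilon>) + K + 1"
    define K0 where "K0 = \<bar>real (card idx) * CC M * 16 ^ d\<bar>"
    define Good where "Good x n \<longleftrightarrow> (\<exists>l\<in>{m*n..<m*n+n}. \<exists>i\<in>idx. \<exists>k.
        infnorm ((2::real)^l *\<^sub>R x - ivec k) \<le> 2 powr (\<eta> * real l) \<and> 2 powr (\<tau> * real n) \<le> norm (c i l k))" for x n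
    define F where "F J = {x. \<forall>n\<ge>J. Good x n}" for J
    have cpos: "\<epsilon> * (real m + 1) > 0" using eps by simp
    obtain J2a where J2a: "\<And>n. n \<ge> J2a \<Longrightarrow> (2 * (K0 * (1 + B))) * real n < 2 powr (\<epsilon> * (real m + 1) * real n)"
      using poly_exp[OF cpos] by blast
    define J2 where "J2 = max J2a 1"
    have cover: "E \<subseteq> (\<Union>J. F J)"
    proof
      fix x assume xE: "x \<in> E"
      obtain J1 where J1: "\<And>n. n \<ge> J1 \<Longrightarrow> norm (\<Sum>l\<in>{m*n..<m*n+n}. Qop \<psi> f l x) \<ge> 2 powr ((\<beta> - \<epsilon>) * (real m + 1) * real n) / 2"
        using level_good[OF xE[unfolded E_def] m1 eps eb] by blast
      have "Good x n" if n: "n \<ge> max J1 J2" for n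
      proof (rule ccontr)
        assume nG: "\<not> Good x n"
        have n1: "n \<ge> 1" using n by (simp add: J2_def)
        have J2n: "(2 * (K0 * (1 + B))) * real n < 2 powr (\<epsilon> * (real m + 1) * real n)"
          using J2a n by (simp add: J2_def)
        have J1n: "norm (\<Sum>l\<in>{m*n..<m*n+n}. Qop \<psi> f l x) \<ge> 2 powr ((\<beta> - \<epsilon>) * (real m + 1) * real n) / 2"
          using J1 n by simp
        obtain l where l: "l \<in> {m*n..<m*n+n}"
          and Ql: "norm (Qop \<psi> f l x) \<ge> (2 powr ((\<beta> - \<epsilon>) * (real m + 1) * real n) / 2) / real n"
          using pigeon[OF n1 J1n] by blast
        define T where "T = 2 powr (\<tau> * real n)"
        define R where "R = 2 powr (\<eta> * real l)"
        have T0: "T > 0" and R0: "R > 0" by (auto simp: T_def R_def)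
        have near: "\<And>i k. i \<in> idx \<Longrightarrow> infnorm ((2::real)^l *\<^sub>R x - ivec k) \<le> R \<Longrightarrow> norm (c i l k) < T"
          using nG l unfolding Good_def T_def R_def by force
        have Qle: "norm (Qop \<psi> f l x) \<le> real (card idx) * (CC M * (T + B * 2 powr (\<kappa> * real l) / R ^ M) * 16 ^ d)"
          using Qb[of T R l x M] near T0 R0 by (simp add: \<kappa>_def)
        have tail: "2 powr (\<kappa> * real l) / R ^ M \<le> T"
        proof -
          have "R ^ M = 2 powr (real M * (\<eta> * real l))" by (simp add: R_def powr_power)
          then have "2 powr (\<kappa> * real l) / R ^ M = 2 powr (\<kappa> * real l - real M * (\<eta> * real l))"
            by (simp add: powr_diff)
          also have "\<dots> \<le> T"
          proof -
            have lm: "real l \<ge> real m * real n" using l by (metis atLeastLessThan_iff of_nat_le_iff of_nat_mult)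
            have Mk: "\<eta> * real M \<ge> \<bar>\<kappa>\<bar>"
            proof -
              have "\<bar>\<kappa>\<bar> * real m \<le> \<eta> * real M * real m"
                using Mb eps by (smt (verit) mult_nonneg_nonneg abs_ge_zero of_nat_0_le_iff)
              then show ?thesis using m1 by simp
            qed
            have A0: "\<eta> * real M - \<kappa> \<ge> 0" using Mk by linarith
            have "\<kappa> * real l - real M * (\<eta> * real l) = - ((\<eta> * real M - \<kappa>) * real l)"
              by (simp add: algebra_simps)
            also have "\<dots> \<le> - ((\<eta> * real M - \<kappa>) * (real m * real n))"
              using A0 lm by (simp add: mult_left_mono)
            also have "\<dots> = (\<kappa> * real m - \<eta> * real M * real m) * real n" by (simp add: algebra_simps)
            also have "\<dots> \<le> (- ((\<bar>\<beta>\<bar> + 2 * \<epsilon>) * (real m + 1))) * real n"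
            proof (intro mult_right_mono)
              have "\<kappa> * real m \<le> \<bar>\<kappa>\<bar> * real m" by (intro mult_right_mono) auto
              then show "\<kappa> * real m - \<eta> * real M * real m \<le> - ((\<bar>\<beta>\<bar> + 2 * \<epsilon>) * (real m + 1))"
                using Mb by linarith
            qed simp
            also have "\<dots> \<le> \<tau> * real n"
            proof (intro mult_right_mono)
              have "- \<bar>\<beta>\<bar> \<le> \<beta>" by simp
              then have "- (\<bar>\<beta>\<bar> + 2 * \<epsilon>) \<le> \<beta> - 2 * \<epsilon>" by linarith
              then show "- ((\<bar>\<beta>\<bar> + 2 * \<epsilon>) * (real m + 1)) \<le> \<tau>"
                unfolding \<tau>_def by (metis minus_mult_left mult_right_mono of_nat_0_le_iff add_nonneg_nonneg zero_le_one)
            qed simp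
            finally show ?thesis by (simp add: T_def)
          qed
          finally show ?thesis .
        qed
        have "norm (Qop \<psi> f l x) \<le> K0 * ((1 + B) * T)"
        proof -
          have "T + B * 2 powr (\<kappa> * real l) / R ^ M \<le> (1 + B) * T"
            using mult_left_mono[OF tail B0] by (simp add: algebra_simps)
          moreover have "T + B * 2 powr (\<kappa> * real l) / R ^ M \<ge> 0" using T0 B0 R0 by simp
          ultimately have "real (card idx) * (CC M * (T + B * 2 powr (\<kappa> * real l) / R ^ M) * 16 ^ d)
              \<le> K0 * ((1 + B) * T)"
          proof -
            define X where "X = T + B * 2 powr (\<kappa> * real l) / R ^ M"
            assume X1: "T + B * 2 powr (\<kappa> * real l) / R ^ M \<le> (1 + B) * T"
              and X0: "T + B * 2 powr (\<kappa> * real l) / R ^ M \<ge> 0"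
            have "real (card idx) * (CC M * X * 16 ^ d) = (real (card idx) * CC M * 16 ^ d) * X"
              by (simp add: mult_ac)
            also have "\<dots> \<le> K0 * X" unfolding K0_def
              using X0 by (intro mult_right_mono) (auto simp: X_def)
            also have "\<dots> \<le> K0 * ((1 + B) * T)"
              using X1 by (intro mult_left_mono) (auto simp: X_def K0_def)
            finally show ?thesis by (simp add: X_def)
          qed
          with Qle show ?thesis by linarith
        qed
        moreover have "K0 * ((1 + B) * T) < (2 powr ((\<beta> - \<epsilon>) * (real m + 1) * real n) / 2) / real n"
        proof -
          have split: "2 powr ((\<beta> - \<epsilon>) * (real m + 1) * real n) = T * 2 powr (\<epsilon> * (real m + 1) * real n)"
            by (simp add: T_def \<tau>_def powr_add[symmetric] algebra_simps)
          have "(2 * (K0 * (1 + B))) * real n * T < 2 powr (\<epsilon> * (real m + 1) * real n) * T"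
            using J2n T0 by (intro mult_strict_right_mono) auto
          then show ?thesis unfolding split using n1 by (simp add: field_simps)
        qed
        ultimately show False using Ql by linarith
      qed
      then show "x \<in> (\<Union>J. F J)" unfolding F_def by blast
    qed
    have pack: "packing_premeasure t (F J) = 0" for J
    proof -
      define Ay where "Ay n = (SIGMA l:{m*n..<m*n+n}. SIGMA i:idx. {k. 2 powr (\<tau> * real n) \<le> norm (c i l k)})" for n
      define Y where "Y n = (\<lambda>(l,i,k). inverse ((2::real)^l) *\<^sub>R ivec k) ` Ay n" for n
      have finA: "finite (Ay n)" for n
        unfolding Ay_def using cfin fin_idx by (intro finite_SigmaI) auto
      have d1: "real d \<ge> 1" by (simp add: d_def)
      have t0: "t \<ge> 0" using tl l0_nonneg by linarith
      have gp: "\<gamma> > 0" using e1 m1 by (simp add: \<gamma>_def)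
      show ?thesis
      proof (rule pack_zero[where J = J and Y = Y and rr = "sqrt (real d)" and \<gamma> = \<gamma> and C = "B powr p" and \<alpha> = \<alpha>])
        fix n assume nJ: "n \<ge> J"
        show "F J \<subseteq> (\<Union>y\<in>Y n. cball y (sqrt (real d) * 2 powr (-\<gamma> * real n)))"
        proof
          fix x assume "x \<in> F J"
          then have "Good x n" using nJ by (simp add: F_def)
          then obtain l i k where l: "l \<in> {m*n..<m*n+n}" and i: "i \<in> idx"
            and inf: "infnorm ((2::real)^l *\<^sub>R x - ivec k) \<le> 2 powr (\<eta> * real l)"
            and big: "2 powr (\<tau> * real n) \<le> norm (c i l k)"
            unfolding Good_def by blast
          define y where "y = inverse ((2::real)^l) *\<^sub>R ivec k"
          have yY: "y \<in> Y n" unfolding Y_def Ay_def y_def using l i big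
            by (intro image_eqI[where x = "(l, i, k)"]) auto
          have "dist y x = norm (inverse ((2::real)^l) *\<^sub>R ((2::real)^l *\<^sub>R x - ivec k))"
          proof -
            have "inverse ((2::real)^l) *\<^sub>R ((2::real)^l *\<^sub>R x - ivec k) = x - y"
              by (simp add: y_def algebra_simps)
            then show ?thesis by (simp add: dist_norm norm_minus_commute)
          qed
          also have "\<dots> = inverse ((2::real)^l) * norm ((2::real)^l *\<^sub>R x - ivec k)" by simp
          also have "\<dots> \<le> inverse ((2::real)^l) * (sqrt (real d) * 2 powr (\<eta> * real l))"
          proof (intro mult_left_mono)
            have "norm ((2::real)^l *\<^sub>R x - ivec k) \<le> sqrt (real DIM(real^'n)) * infnorm ((2::real)^l *\<^sub>R x - ivec k)"
              by (rule norm_le_infnorm)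
            also have "\<dots> = sqrt (real d) * infnorm ((2::real)^l *\<^sub>R x - ivec k)"
              by (simp add: d_def)
            also have "\<dots> \<le> sqrt (real d) * 2 powr (\<eta> * real l)"
              using inf by (intro mult_left_mono) auto
            finally show "norm ((2::real)^l *\<^sub>R x - ivec k) \<le> sqrt (real d) * 2 powr (\<eta> * real l)" .
          qed simp
          also have "\<dots> = sqrt (real d) * 2 powr ((\<eta> - 1) * real l)"
          proof -
            have "inverse ((2::real)^l) = 2 powr (- real l)"
              by (simp add: powr_minus powr_realpow)
            then show ?thesis by (simp add: powr_add[symmetric] algebra_simps)
          qed
          also have "\<dots> \<le> sqrt (real d) * 2 powr (-\<gamma> * real n)"
          proof -
            have lm: "real l \<ge> real m * real n" using l by (metis atLeastLessThan_iff of_nat_le_iff of_nat_mult)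
            have "(\<eta> - 1) * real l \<le> (\<eta> - 1) * (real m * real n)"
              using lm e1 by (intro mult_left_mono_neg) auto
            also have "\<dots> = -\<gamma> * real n" by (simp add: \<gamma>_def algebra_simps)
            finally show ?thesis by (intro mult_left_mono) auto
          qed
          finally have "dist y x \<le> sqrt (real d) * 2 powr (-\<gamma> * real n)" .
          with yY show "x \<in> (\<Union>y\<in>Y n. cball y (sqrt (real d) * 2 powr (-\<gamma> * real n)))"
            by (auto simp: mem_cball)
        qed
      next
        fix n show "finite (Y n)" unfolding Y_def using finA by simp
      next
        fix n
        define T where "T = 2 powr (\<tau> * real n)"
        have T0: "T > 0" by (simp add: T_def)
        have TP: "T powr p = 2 powr (\<tau> * p * real n)" by (simp add: T_def powr_powr mult_ac)
        have "real (card (Y n)) \<le> real (card (Ay n))" unfolding Y_def by (simp add: card_image_le finA)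
        also have "real (card (Ay n)) = (\<Sum>l\<in>{m*n..<m*n+n}. \<Sum>i\<in>idx. real (card {k. T \<le> norm (c i l k)}))"
        proof -
          have "card (Ay n) = (\<Sum>l\<in>{m*n..<m*n+n}. card (SIGMA i:idx. {k. T \<le> norm (c i l k)}))"
            unfolding Ay_def T_def using cfin fin_idx by (intro card_SigmaI) (auto intro!: finite_SigmaI)
          also have "\<dots> = (\<Sum>l\<in>{m*n..<m*n+n}. \<Sum>i\<in>idx. card {k. T \<le> norm (c i l k)})"
            using cfin[OF T0] fin_idx by (intro sum.cong refl card_SigmaI) auto
          finally show ?thesis by simp
        qed
        also have "\<dots> \<le> (\<Sum>l\<in>{m*n..<m*n+n}. B powr p * 2 powr (((real d - s * p) * (real m + 1) + K) * real n) / T powr p)"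
        proof (intro sum_mono)
          fix l assume l: "l \<in> {m*n..<m*n+n}"
          have "(\<Sum>i\<in>idx. real (card {k. T \<le> norm (c i l k)})) \<le> Tot l / T powr p"
            using cnt[OF T0, of l] T0 by (simp add: le_divide_eq)
          also have "\<dots> \<le> B powr p * 2 powr ((real d - s * p) * real l) / T powr p"
            using TotB[of l] T0 by (intro divide_right_mono) auto
          also have "\<dots> \<le> B powr p * 2 powr (((real d - s * p) * (real m + 1) + K) * real n) / T powr p"
          proof -
            have lm: "real m * real n \<le> real l" "real l \<le> (real m + 1) * real n"
              using l by (auto simp: algebra_simps) (metis of_nat_le_iff of_nat_mult,
                  metis less_imp_le of_nat_add of_nat_le_iff of_nat_mult)
            have "(real d - s * p) * real l \<le> ((real d - s * p) * (real m + 1) + K) * real n"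
            proof (cases "real d - s * p \<ge> 0")
              case True
              have "(real d - s * p) * real l \<le> (real d - s * p) * ((real m + 1) * real n)"
                using True lm by (intro mult_left_mono) auto
              moreover have "0 \<le> K * real n" by (simp add: K_def)
              ultimately show ?thesis by (simp add: algebra_simps)
            next
              case False
              have "(real d - s * p) * real l \<le> (real d - s * p) * (real m * real n)"
                using False lm by (intro mult_left_mono_neg) auto
              moreover have Kq: "K = -(real d - s * p)" using False by (simp add: K_def)
              have "((real d - s * p) * (real m + 1) + K) * real n = (real d - s * p) * (real m * real n)"
                unfolding Kq by (simp add: algebra_simps)
              ultimately show ?thesis by linarith
            qed
            then show ?thesis using B0 T0 by (intro divide_right_mono mult_left_mono) auto
          qed
          finally show "(\<Sum>i\<in>idx. real (card {k. T \<le> norm (c i l k)})) \<le> B powr p * 2 powr (((real d - s * p) * (real m + 1) + K) * real n) / T powr p" .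
        qed
        also have "\<dots> = real n * (B powr p * 2 powr (((real d - s * p) * (real m + 1) + K) * real n - \<tau> * p * real n))"
          by (simp add: TP powr_diff)
        also have "\<dots> \<le> 2 powr (real n) * (B powr p * 2 powr (((real d - s * p) * (real m + 1) + K) * real n - \<tau> * p * real n))"
        proof (intro mult_right_mono)
          have "real n < 2 ^ n" by (rule of_nat_less_two_power)
          then show "real n \<le> 2 powr (real n)" by (simp add: powr_realpow)
        qed simp
        also have "\<dots> = B powr p * 2 powr (\<alpha> * real n)"
        proof -
          have "real n + (((real d - s * p) * (real m + 1) + K) * real n - \<tau> * p * real n) = \<alpha> * real n"
            by (simp add: \<alpha>_def \<tau>_def l0_def algebra_simps)
          then show ?thesis by (simp add: powr_add[symmetric] mult_ac)
        qed
        finally show "real (card (Y n)) \<le> B powr p * 2 powr (\<alpha> * real n)" .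
      next
        show "\<gamma> > 0" by (rule gp)
      next
        show "sqrt (real d) > 0" using d1 by simp
      next
        show "\<alpha> < t * \<gamma>" using ineq by (simp add: \<alpha>_def \<gamma>_def)
      next
        show "t \<ge> 0" by (rule t0)
      qed
    qed
    show ?thesis by (rule measure_zero_cover[OF cover pack])
  qed
  have "packing_dim E \<le> l0" by (rule dim_le[OF l0_nonneg key])
  then show ?thesis by (simp add: E_def l0_def d_def)
qed

end
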